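(* Let $\mathbbm{k}$ be a field, $n\ge 1$, $m\geq 0$, and $A_1,\dots,A_m\in\mathrm{Mat}_n(\mathbbm{k})$. Then $$\det P_m(A_1,\dots,A_m)=(-1)^{mn}\det Q_m(A_1,\dots,A_m).$$
   Context: For noncommuting variables $a_1,a_2,\dots$ define polynomials by $P_0=1$, $P_1(a_1)=a_1$, $P_m(a_1,\dots,a_m)=P_{m-1}(a_1,\dots,a_{m-1})a_m+P_{m-2}(a_1,\dots,a_{m-2})$, and $Q_0=1$, $Q_1(a_1)=-a_1$, $Q_m(a_1,\dots,a_m)=-Q_{m-1}(a_2,\dots,a_m)a_1+Q_{m-2}(a_3,\dots,a_m)$. (E.g. $P_2=1+a_1a_2$, $Q_2=1+a_2a_1$.) These are evaluated on matrices. *)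

theory Defs
  imports "HOL-Analysis.Analysis"
begin

text \<open>Continuant-type matrix polynomials. A list [A_1, ..., A_m] encodes the
arguments. P is defined by recursion at the end of the list, so we define an
auxiliary function on the reversed list.\<close>

fun P_rev :: "('a::comm_ring_1^'n^'n) list \<Rightarrow> 'a^'n^'n" where
  "P_rev [] = mat 1"
| "P_rev [a] = a"
| "P_rev (a # b # ys) = P_rev (b # ys) ** a + P_rev ys"

definition P :: "('a::comm_ring_1^'n^'n) list \<Rightarrow> 'a^'n^'n" where
  "P xs = P_rev (rev xs)"

fun Q :: "('a::comm_ring_1^'n^'n) list \<Rightarrow> 'a^'n^'n" where
  "Q [] = mat 1"
| "Q [a] = - a"
| "Q (a # b # xs) = - (Q (b # xs)) ** a + Q xs"

end

theory Submission
  imports Defs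
begin

definition blk :: "'a::comm_ring_1^'n::finite^'n \<Rightarrow> 'a^'n^'n \<Rightarrow> 'a^'n^'n \<Rightarrow> 'a^'n^'n \<Rightarrow> 'a^('n+'n)^('n+'n)" where
  "blk A B C D = (\<chi> i j. case i of Inl i' \<Rightarrow> (case j of Inl j' \<Rightarrow> A$i'$j' | Inr j' \<Rightarrow> B$i'$j')
                                 | Inr i' \<Rightarrow> (case j of Inl j' \<Rightarrow> C$i'$j' | Inr j' \<Rightarrow> D$i'$j'))"

lemma blk_nth[simp]:
  "blk A B C D $ Inl i $ Inl j = A$i$j" "blk A B C D $ Inl i $ Inr j = B$i$j"
  "blk A B C D $ Inr i $ Inl j = C$i$j" "blk A B C D $ Inr i $ Inr j = D$i$j"
  by (simp_all add: blk_def)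

lemma sum_UNIV_sum: "(\<Sum>k\<in>(UNIV::('n::finite+'n) set). f k) = (\<Sum>k\<in>UNIV. f (Inl k)) + (\<Sum>k\<in>UNIV. f (Inr k))"
  by (subst UNIV_Plus_UNIV[symmetric], subst sum.Plus) (auto simp: o_def)

lemma prod_UNIV_sum: "(\<Prod>k\<in>(UNIV::('n::finite+'n) set). f k) = (\<Prod>k\<in>UNIV. f (Inl k)) * (\<Prod>k\<in>UNIV. f (Inr k))"
  by (subst UNIV_Plus_UNIV[symmetric], subst prod.Plus) (auto simp: o_def)

lemma blk_eq_iff: "M = N \<longleftrightarrow> (\<forall>i j. M $ Inl i $ Inl j = N $ Inl i $ Inl j \<and> M $ Inl i $ Inr j = N $ Inl i $ Inr j
   \<and> M $ Inr i $ Inl j = N $ Inr i $ Inl j \<and> M $ Inr i $ Inr j = N $ Inr i $ Inr j)"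
  for M N :: "'a^('n::finite+'n)^('n+'n)"
  apply (auto simp: vec_eq_iff)
  by (metis sum.exhaust)

lemma blk_mult: "blk A B C D ** blk E F G H = blk (A**E + B**G) (A**F+B**H) (C**E+D**G) (C**F+D**H)"
  by (simp add: blk_eq_iff matrix_matrix_mult_def sum_UNIV_sum)

lemma blk_one: "mat 1 = blk (mat 1) 0 0 (mat 1)"
  by (simp add: blk_eq_iff mat_def)

lemma blk_transpose: "transpose (blk A B C D) = blk (transpose A) (transpose C) (transpose B) (transpose D)"
  by (simp add: blk_eq_iff transpose_def)

lemma blk_all: "M = blk (\<chi> i j. M$Inl i$Inl j) (\<chi> i j. M$Inl i$Inr j) (\<chi> i j. M$Inr i$Inl j) (\<chi> i j. M$Inr i$Inr j)"
  by (simp add: blk_eq_iff)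


lemma det_U1: fixes C :: "'a::comm_ring_1^'n::finite^'n"
  shows "det (blk (mat 1) 0 C (mat 1)) = 1"
proof -
  let ?M = "blk (mat 1) 0 C (mat 1)"
  let ?U = "UNIV :: ('n+'n) set"
  let ?pp = "\<lambda>p. of_int (sign p) * prod (\<lambda>i. ?M$i$p i) ?U"
  have p0: "\<forall>p \<in> {p. p permutes ?U} - {id}. ?pp p = 0"
  proof
    fix p :: "'n+'n \<Rightarrow> 'n+'n" assume p: "p \<in> {p. p permutes ?U} - {id}"
    hence pu: "p permutes ?U" and pid: "p \<noteq> id" by auto
    have "\<exists>i. ?M$i$p i = 0"
    proof (rule ccontr)
      assume "\<not> ?thesis"
      hence nz: "\<And>i. ?M$i$p i \<noteq> 0" by blast
      have l: "p (Inl i) = Inl i" for i :: 'n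
        using nz[of "Inl i"] by (cases "p (Inl i)") (simp_all add: mat_def split: if_splits)
      have r: "p (Inr i) = Inr i" for i :: 'n
      proof (cases "p (Inr i)")
        case (Inl k)
        hence "p (Inr i) = p (Inl k)" using l by simp
        hence "Inr i = Inl k" using permutes_inj[OF pu] by (auto dest: injD)
        thus ?thesis by simp
      next
        case (Inr k) thus ?thesis using nz[of "Inr i"] by (simp add: mat_def split: if_splits)
      qed
      have "p = id"
      proof
        fix x show "p x = id x" using l r by (cases x) auto
      qed
      thus False using pid by simp
    qed
    then obtain i where "?M$i$p i = 0" by blast
    hence "prod (\<lambda>i. ?M$i$p i) ?U = 0" by (intro prod_zero) auto
    thus "?pp p = 0" by simp
  qed
  have id0: "{id} \<subseteq> {p. p permutes ?U}" by (auto simp: permutes_id)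
  from sum.mono_neutral_cong_left[OF finite_permutations[OF finite] id0 p0] show ?thesis
    unfolding det_def by (simp add: prod_UNIV_sum mat_def)
qed


lemma permutes_map_sum:
  assumes q: "q permutes (UNIV :: 'n set)"
  shows "map_sum q (id :: 'm \<Rightarrow> 'm) permutes UNIV"
proof (rule bij_imp_permutes)
  have "map_sum (inv q) id \<circ> map_sum q (id :: 'm \<Rightarrow> 'm) = id"
    by (simp add: map_sum.comp permutes_inv_o[OF q] map_sum.id)
  moreover have "map_sum q (id :: 'm \<Rightarrow> 'm) \<circ> map_sum (inv q) id = id"
    by (simp add: map_sum.comp permutes_inv_o[OF q] map_sum.id)
  ultimately show "bij_betw (map_sum q (id :: 'm \<Rightarrow> 'm)) UNIV UNIV"
    using o_bij by blast
qed auto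

lemma sign_map_sum:
  assumes q: "q permutes (UNIV :: 'n::finite set)"
  shows "sign (map_sum q (id :: 'm::finite \<Rightarrow> 'm)) = sign q"
  using q finite
proof (induction rule: permutes_induct)
  case id
  have "map_sum (id::'n\<Rightarrow>'n) (id :: 'm \<Rightarrow> 'm) = id" by (simp add: map_sum.id)
  thus ?case by (simp only: sign_id)
next
  case (swap a b p)
  have e: "map_sum (Transposition.transpose a b \<circ> p) (id::'m\<Rightarrow>'m) = Transposition.transpose (Inl a) (Inl b) \<circ> map_sum p id"
  proof
    fix x :: "'n+'m" show "map_sum (Transposition.transpose a b \<circ> p) id x = (Transposition.transpose (Inl a) (Inl b) \<circ> map_sum p id) x"
      by (cases x) (auto simp: Transposition.transpose_def)
  qed
  have pm: "permutation (map_sum p (id::'m\<Rightarrow>'m))"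
    using permutes_map_sum[OF swap.hyps(4)] finite permutation_permutes by blast
  have pp: "permutation p" using swap.hyps(4) finite permutation_permutes by blast
  have IH: "sign (map_sum p (id::'m\<Rightarrow>'m)) = sign p" using swap.IH by (simp add: id_def)
  show ?case
    unfolding e
    by (simp only: sign_compose[OF permutation_swap_id pm] sign_compose[OF permutation_swap_id pp] IH sign_swap_id)
      (use swap.hyps in simp)
qed


lemma det_D1: fixes A :: "'a::comm_ring_1^'n::finite^'n"
  shows "det (blk A 0 0 (mat 1)) = det A"
proof -
  let ?M = "blk A 0 0 (mat 1)"
  let ?U = "UNIV :: ('n+'n) set"
  let ?T = "{p. p permutes ?U \<and> (\<forall>j. p (Inr j) = Inr j)}"
  let ?pp = "\<lambda>p. of_int (sign p) * prod (\<lambda>i. ?M$i$p i) ?U"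
  have T0: "\<forall>p \<in> {p. p permutes ?U} - ?T. ?pp p = 0"
  proof
    fix p :: "'n+'n \<Rightarrow> 'n+'n" assume p: "p \<in> {p. p permutes ?U} - ?T"
    then obtain j where j: "p (Inr j) \<noteq> Inr j" by auto
    have "?M $ Inr j $ p (Inr j) = 0"
      using j by (cases "p (Inr j)") (simp_all add: mat_def)
    hence "prod (\<lambda>i. ?M$i$p i) ?U = 0" by (intro prod_zero) auto
    thus "?pp p = 0" by simp
  qed
  have sub: "?T \<subseteq> {p. p permutes ?U}" by auto
  have "det ?M = sum ?pp ?T"
    unfolding det_def
    by (rule sum.mono_neutral_right[OF finite_permutations[OF finite] sub T0])
  also have "(\<Sum>q\<in>{q. q permutes (UNIV::'n set)}. of_int (sign q) * prod (\<lambda>i. A$i$q i) UNIV) = sum ?pp ?T"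
  proof (rule sum.reindex_bij_witness[where i = "\<lambda>p x. projl (p (Inl x))" and j = "\<lambda>q. map_sum q id"])
    fix q :: "'n \<Rightarrow> 'n" assume q: "q \<in> {q. q permutes UNIV}"
    show "(\<lambda>x. projl (map_sum q id (Inl x))) = q" by simp
    show "map_sum q id \<in> ?T" using permutes_map_sum[of q] q by simp
    show "?pp (map_sum q id) = of_int (sign q) * prod (\<lambda>i. A$i$q i) UNIV"
      using sign_map_sum[of q, where 'm='n] q by (simp add: prod_UNIV_sum mat_def)
  next
    fix p assume p: "p \<in> ?T"
    hence pu: "p permutes ?U" and r: "\<And>j. p (Inr j) = Inr j" by auto
    have l: "\<exists>k. p (Inl x) = Inl k" for x
    proof (cases "p (Inl x)")
      case (Inr j)
      hence "p (Inl x) = p (Inr j)" using r by simp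
      hence "Inl x = Inr j" using permutes_inj[OF pu] by (auto dest: injD)
      thus ?thesis by simp
    qed auto
    show "map_sum (\<lambda>x. projl (p (Inl x))) id = p"
    proof
      fix y show "map_sum (\<lambda>x. projl (p (Inl x))) id y = p y"
      proof (cases y)
        case (Inl x)
        then obtain k where "p (Inl x) = Inl k" using l by blast
        thus ?thesis using Inl by simp
      next
        case (Inr x) thus ?thesis using r by simp
      qed
    qed
    show "(\<lambda>x. projl (p (Inl x))) \<in> {q. q permutes UNIV}"
    proof -
      have "\<exists>!x. projl (p (Inl x)) = y" for y
      proof -
        obtain z where z: "p z = Inl y" using pu permutes_univ by metis
        obtain x where x: "z = Inl x" using z r by (cases z) auto
        show ?thesis
        proof (rule ex1I[of _ x])
          show "projl (p (Inl x)) = y" using z x by simp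
          fix x' assume "projl (p (Inl x')) = y"
          hence "p (Inl x') = Inl y" using l[of x'] by auto
          hence "p (Inl x') = p (Inl x)" using z x by simp
          thus "x' = x" using permutes_inj[OF pu] by (auto dest: injD)
        qed
      qed
      thus ?thesis by (simp add: permutes_univ)
    qed
  qed
  finally show ?thesis unfolding det_def by simp
qed


lemma blk_inj: "blk A B C D = blk A' B' C' D' \<longleftrightarrow> A = A' \<and> B = B' \<and> C = C' \<and> D = D'"
  by (auto simp: blk_eq_iff vec_eq_iff)

definition swp :: "'n+'n \<Rightarrow> 'n+'n" where "swp = case_sum Inr Inl"

lemma swp_swp[simp]: "swp (swp x) = x" by (cases x) (simp_all add: swp_def)
lemma swp_simps[simp]: "swp (Inl x) = Inr x" "swp (Inr x) = Inl x" by (simp_all add: swp_def)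

lemma swp_permutes: "swp permutes UNIV"
proof (rule bij_imp_permutes)
  have "swp \<circ> swp = id" by (rule ext) simp
  thus "bij_betw swp UNIV UNIV" using o_bij by blast
qed auto

lemma det_D2: fixes D :: "'a::comm_ring_1^'n::finite^'n"
  shows "det (blk (mat 1) 0 0 D) = det D"
proof -
  define M where "M = blk D 0 0 (mat 1)"
  define N :: "'a^('n+'n)^('n+'n)" where "N = (\<chi> i. M $ swp i)"
  have sp: "(swp :: 'n+'n \<Rightarrow> 'n+'n) permutes UNIV" by (rule swp_permutes)
  have e: "blk (mat 1) 0 0 D = (\<chi> i j. N $ i $ swp j)"
    by (simp add: blk_eq_iff N_def M_def)
  have 1: "det (\<chi> i j. N $ i $ swp j) = of_int (sign (swp :: 'n+'n \<Rightarrow> 'n+'n)) * det N"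
    by (rule det_permute_columns[OF sp])
  have 2: "det N = of_int (sign (swp :: 'n+'n \<Rightarrow> 'n+'n)) * det M"
    unfolding N_def by (rule det_permute_rows[OF sp])
  have "det (blk (mat 1) 0 0 D) = of_int (sign (swp :: 'n+'n \<Rightarrow> 'n+'n)) * (of_int (sign (swp :: 'n+'n \<Rightarrow> 'n+'n)) * det M)"
    unfolding e 1 2 ..
  also have "\<dots> = det M" by (simp add: mult.assoc[symmetric] of_int_mult[symmetric])
  finally show ?thesis using det_D1 M_def by metis
qed

lemma transpose_zero[simp]: "transpose 0 = 0"
  by (simp add: transpose_def vec_eq_iff)

lemma det_U2: fixes B :: "'a::comm_ring_1^'n::finite^'n"
  shows "det (blk (mat 1) B 0 (mat 1)) = 1"
proof -
  have "transpose (blk (mat 1) B 0 (mat 1)) = blk (mat 1) 0 (transpose B) (mat 1)"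
    by (simp add: blk_transpose transpose_mat)
  thus ?thesis by (metis det_transpose det_U1)
qed

lemma det_L1: fixes A :: "'a::comm_ring_1^'n::finite^'n"
  shows "det (blk A 0 C (mat 1)) = det A"
proof -
  have "blk A 0 C (mat 1) = blk A 0 0 (mat 1) ** blk (mat 1) 0 C (mat 1)"
    by (simp add: blk_mult)
  thus ?thesis by (simp add: det_mul det_D1 det_U1)
qed

lemma det_L2: fixes D :: "'a::comm_ring_1^'n::finite^'n"
  shows "det (blk (mat 1) B 0 D) = det D"
proof -
  have "blk (mat 1) B 0 D = blk (mat 1) 0 0 D ** blk (mat 1) B 0 (mat 1)"
    by (simp add: blk_mult)
  thus ?thesis by (simp add: det_mul det_D2 det_U2)
qed

lemma jacobi: fixes A :: "'a::comm_ring_1^'n::finite^'n"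
  assumes "blk A B C D ** blk E F G H = mat 1"
  shows "det A = det (blk A B C D) * det H"
proof -
  from assms have "A ** F + B ** H = 0" "C ** F + D ** H = mat 1"
    by (simp_all add: blk_mult blk_one blk_inj)
  hence "blk A B C D ** blk (mat 1) F 0 H = blk A 0 C (mat 1)"
    by (simp add: blk_mult)
  hence "det A = det (blk A B C D ** blk (mat 1) F 0 H)" by (simp add: det_L1)
  thus ?thesis by (simp add: det_mul det_L2)
qed


definition Mb :: "'a::comm_ring_1^'n::finite^'n \<Rightarrow> 'a^('n+'n)^('n+'n)" where
  "Mb a = blk a (mat 1) (mat 1) 0"
definition Nb :: "'a::comm_ring_1^'n::finite^'n \<Rightarrow> 'a^('n+'n)^('n+'n)" where
  "Nb a = blk 0 (mat 1) (mat 1) (-a)"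

fun Xm :: "('a::comm_ring_1^'n::finite^'n) list \<Rightarrow> 'a^('n+'n)^('n+'n)" where
  "Xm [] = mat 1" | "Xm (a # as) = Mb a ** Xm as"
fun Ym :: "('a::comm_ring_1^'n::finite^'n) list \<Rightarrow> 'a^('n+'n)^('n+'n)" where
  "Ym [] = mat 1" | "Ym (a # as) = Ym as ** Nb a"

lemma mat_neg_mult: "A ** (- B) = - (A ** B)" "(- A) ** B = - (A ** B)"
  for A B :: "'a::comm_ring_1^'n::finite^'n"
  by (simp_all add: matrix_matrix_mult_def vec_eq_iff sum_negf)

lemma Mb_Nb: "Mb a ** Nb a = mat 1"
  by (simp add: Mb_def Nb_def blk_mult blk_one mat_neg_mult)

lemma XY: "Xm as ** Ym as = mat 1"
proof (induction as)
  case (Cons a as)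
  have "Xm (a#as) ** Ym (a#as) = Mb a ** (Xm as ** Ym as) ** Nb a"
    by (simp add: matrix_mul_assoc)
  thus ?case using Cons Mb_Nb by simp
qed simp

lemma Xm_snoc: "Xm (as @ [a]) = Xm as ** Mb a"
  by (induction as) (simp_all add: matrix_mul_assoc)

definition b11 :: "'a^('n+'n)^('n+'n) \<Rightarrow> 'a^'n^'n" where "b11 M = (\<chi> i j. M$Inl i$Inl j)"
definition b12 :: "'a^('n+'n)^('n+'n) \<Rightarrow> 'a^'n^'n" where "b12 M = (\<chi> i j. M$Inl i$Inr j)"
definition b21 :: "'a^('n+'n)^('n+'n) \<Rightarrow> 'a^'n^'n" where "b21 M = (\<chi> i j. M$Inr i$Inl j)"
definition b22 :: "'a^('n+'n)^('n+'n) \<Rightarrow> 'a^'n^'n" where "b22 M = (\<chi> i j. M$Inr i$Inr j)"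

lemma blk_all': "M = blk (b11 M) (b12 M) (b21 M) (b22 M)"
  by (simp add: b11_def b12_def b21_def b22_def blk_eq_iff)

lemma b_blk[simp]: "b11 (blk A B C D) = A" "b12 (blk A B C D) = B" "b21 (blk A B C D) = C" "b22 (blk A B C D) = D"
  by (simp_all add: b11_def b12_def b21_def b22_def vec_eq_iff)

lemma Xm_P: "b11 (Xm (rev rs)) = P_rev rs \<and> (rs \<noteq> [] \<longrightarrow> b12 (Xm (rev rs)) = P_rev (tl rs))"
proof (induction rs rule: P_rev.induct)
  case 1
  then show ?case by (simp add: blk_one[symmetric] b11_def mat_def vec_eq_iff)
next
  case (2 a)
  then show ?case by (simp add: Mb_def)
next
  case (3 a b ys)
  have "Xm (rev (a # b # ys)) = Xm (rev (b # ys)) ** Mb a"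
    by (simp add: Xm_snoc[symmetric])
  also have "\<dots> = blk (b11 (Xm (rev (b # ys)))) (b12 (Xm (rev (b # ys)))) (b21 (Xm (rev (b # ys)))) (b22 (Xm (rev (b # ys)))) ** Mb a"
    using blk_all' by metis
  finally show ?case using 3 by (simp add: Mb_def blk_mult)
qed

lemma Ym_Q: "b22 (Ym as) = Q as \<and> (as \<noteq> [] \<longrightarrow> b21 (Ym as) = Q (tl as))"
proof (induction as rule: Q.induct)
  case 1
  then show ?case by (simp add: blk_one[symmetric] b22_def mat_def vec_eq_iff)
next
  case (2 a)
  then show ?case by (simp add: Nb_def)
next
  case (3 a b ys)
  have "Ym (a # b # ys) = Ym (b # ys) ** Nb a" by simp
  also have "\<dots> = blk (b11 (Ym (b # ys))) (b12 (Ym (b # ys))) (b21 (Ym (b # ys))) (b22 (Ym (b # ys))) ** Nb a"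
    using blk_all' by metis
  finally show ?case using 3 by (simp add: Nb_def blk_mult mat_neg_mult)
qed


lemma neg_mat1: "- (mat 1 :: 'a::comm_ring_1^'n::finite^'n) = mat (-1)"
  by (simp add: vec_eq_iff mat_def)

lemma det_neg1: "det (- (mat 1 :: 'a::comm_ring_1^'n::finite^'n)) = (-1) ^ CARD('n)"
  unfolding neg_mat1 by (subst det_diagonal) (simp_all add: mat_def)

lemma det_Mb: "det (Mb (a :: 'a::comm_ring_1^'n::finite^'n)) = (-1) ^ CARD('n)"
proof -
  let ?I = "mat 1 :: 'a^'n^'n"
  have s1: "blk 0 ?I (-?I) 0 = blk ?I 0 (-?I) ?I ** blk ?I ?I 0 ?I ** blk ?I 0 (-?I) ?I"
    by (simp add: blk_mult mat_neg_mult)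
  have d1: "det (blk 0 ?I (-?I) 0) = 1"
    unfolding s1 det_mul by (simp add: det_L1 det_U2)
  have s2: "blk 0 ?I ?I 0 = blk 0 ?I (-?I) 0 ** blk (-?I) 0 0 ?I"
    by (simp add: blk_mult mat_neg_mult)
  have d2: "det (blk 0 ?I ?I 0) = (-1) ^ CARD('n)"
    unfolding s2 det_mul d1 by (simp add: det_D1 det_neg1)
  have s3: "Mb a = blk ?I a 0 ?I ** blk 0 ?I ?I 0"
    by (simp add: Mb_def blk_mult)
  show ?thesis unfolding s3 det_mul d2 by (simp add: det_U2)
qed

lemma det_Xm: "det (Xm (as :: ('a::comm_ring_1^'n::finite^'n) list)) = ((-1) ^ CARD('n)) ^ length as"
  by (induction as) (simp_all add: det_mul det_Mb)

theorem mainTheorem2: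
  fixes As :: "('a::field^'n::finite^'n) list"
  shows "det (P As) = (-1) ^ (length As * CARD('n)) * det (Q As)"
proof -
  have xp: "b11 (Xm As) = P As"
    using Xm_P[of "rev As"] by (simp add: P_def)
  have yq: "b22 (Ym As) = Q As" using Ym_Q by blast
  have "blk (b11 (Xm As)) (b12 (Xm As)) (b21 (Xm As)) (b22 (Xm As)) ** blk (b11 (Ym As)) (b12 (Ym As)) (b21 (Ym As)) (b22 (Ym As)) = mat 1"
    using XY[of As] blk_all'[of "Xm As"] blk_all'[of "Ym As"] by metis
  from jacobi[OF this] have "det (b11 (Xm As)) = det (Xm As) * det (b22 (Ym As))"
    using blk_all'[of "Xm As"] by metis
  thus ?thesis unfolding xp yq det_Xm by (simp add: power_mult mult.commute)
qed

end
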